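(* Let $F$ be a field with $\mathrm{char}\,F\ne2$ and let $A$ be an involutive $F$-algebra with involution $a\mapsto\bar a$ and trace $\mathrm{tr}(a)=a+\bar a\in F$. Then: (1) $\overline{ab}-ba=\mathrm{tr}(a)\mathrm{tr}(b)-\mathrm{tr}(a)b-\mathrm{tr}(b)a$ for all $a,b\in A$; (2) $A$ is von-Neumann finite if and only if for all $a,b\in A$ with $ab\in F\setminus\{0\}$ (i.e. $ab$ is a nonzero scalar multiple of $1$), either $a,b\in\mathrm{Im}\,A$ or $1,a,b$ are linearly dependent; (3) $A$ is reversible if and only if for all $a,b\in A$ with $ab=0$, either $a,b\in\mathrm{Im}\,A$ or $1,a,b$ are linearly dependent.
   Context: Algebras are unital with bilinear, not necessarily associative, multiplication; $F$ is identified with $F1$. $A$ is involutive if there is an anti-automorphism $\sigma$ (written $\sigma(a)=\bar a$) with $\sigma^2=\mathrm{id}$ and $a+\bar a\in F1$, $a\bar a\in F1$ for all $a$. $\mathrm{Im}\,A=\{u\in A\setminus F1: u^2\in F1\}\cup\{0\}$. von-Neumann finite: $ab=1\Rightarrow ba=1$; reversible: $ab=0\Rightarrow ba=0$. *)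

theory Defs
  imports Main "HOL.Vector_Spaces"
begin

definition unital_algebra ::
  "('f::field \<Rightarrow> 'v::ab_group_add \<Rightarrow> 'v) \<Rightarrow> ('v \<Rightarrow> 'v \<Rightarrow> 'v) \<Rightarrow> 'v \<Rightarrow> bool" where
  "unital_algebra scale mult one \<longleftrightarrow>
     vector_space scale \<and>
     (\<forall>x y z. mult (x + y) z = mult x z + mult y z) \<and>
     (\<forall>x y z. mult x (y + z) = mult x y + mult x z) \<and>
     (\<forall>c x y. mult (scale c x) y = scale c (mult x y)) \<and>
     (\<forall>c x y. mult x (scale c y) = scale c (mult x y)) \<and>
     (\<forall>x. mult one x = x \<and> mult x one = x)"

definition is_scalar :: "('f::field \<Rightarrow> 'v::ab_group_add \<Rightarrow> 'v) \<Rightarrow> 'v \<Rightarrow> 'v \<Rightarrow> bool" where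
  "is_scalar scale one x \<longleftrightarrow> (\<exists>t. x = scale t one)"

definition involution ::
  "('f::field \<Rightarrow> 'v::ab_group_add \<Rightarrow> 'v) \<Rightarrow> ('v \<Rightarrow> 'v \<Rightarrow> 'v) \<Rightarrow> 'v \<Rightarrow> ('v \<Rightarrow> 'v) \<Rightarrow> bool" where
  "involution scale mult one \<sigma> \<longleftrightarrow>
     (\<forall>x y. \<sigma> (x + y) = \<sigma> x + \<sigma> y) \<and>
     (\<forall>c x. \<sigma> (scale c x) = scale c (\<sigma> x)) \<and>
     (\<forall>x y. \<sigma> (mult x y) = mult (\<sigma> y) (\<sigma> x)) \<and>
     \<sigma> one = one \<and>
     (\<forall>x. \<sigma> (\<sigma> x) = x) \<and>
     (\<forall>x. is_scalar scale one (x + \<sigma> x)) \<and>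
     (\<forall>x. is_scalar scale one (mult x (\<sigma> x)))"

definition trace ::
  "('f::field \<Rightarrow> 'v::ab_group_add \<Rightarrow> 'v) \<Rightarrow> 'v \<Rightarrow> ('v \<Rightarrow> 'v) \<Rightarrow> 'v \<Rightarrow> 'f" where
  "trace scale one \<sigma> x = (THE t. x + \<sigma> x = scale t one)"

definition imag_part ::
  "('f::field \<Rightarrow> 'v::ab_group_add \<Rightarrow> 'v) \<Rightarrow> ('v \<Rightarrow> 'v \<Rightarrow> 'v) \<Rightarrow> 'v \<Rightarrow> 'v set" where
  "imag_part scale mult one =
     {u. \<not> is_scalar scale one u \<and> is_scalar scale one (mult u u)} \<union> {0}"

definition lin_dep3 ::
  "('f::field \<Rightarrow> 'v::ab_group_add \<Rightarrow> 'v) \<Rightarrow> 'v \<Rightarrow> 'v \<Rightarrow> 'v \<Rightarrow> bool" where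
  "lin_dep3 scale x y z \<longleftrightarrow>
     (\<exists>c0 c1 c2. (c0, c1, c2) \<noteq> (0, 0, 0) \<and> scale c0 x + scale c1 y + scale c2 z = 0)"

definition vN_finite :: "('v \<Rightarrow> 'v \<Rightarrow> 'v) \<Rightarrow> 'v \<Rightarrow> bool" where
  "vN_finite mult one \<longleftrightarrow> (\<forall>a b. mult a b = one \<longrightarrow> mult b a = one)"

definition reversible :: "('v::zero \<Rightarrow> 'v \<Rightarrow> 'v) \<Rightarrow> bool" where
  "reversible mult \<longleftrightarrow> (\<forall>a b. mult a b = 0 \<longrightarrow> mult b a = 0)"

end

theory Submission
  imports Defs
begin

locale ia =
  fixes scale :: "'f::field \<Rightarrow> 'v::ab_group_add \<Rightarrow> 'v"
    and mult :: "'v \<Rightarrow> 'v \<Rightarrow> 'v" and one :: 'v and \<sigma> :: "'v \<Rightarrow> 'v"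
  assumes alg: "unital_algebra scale mult one"
    and inv: "involution scale mult one \<sigma>"
begin

sublocale vector_space scale using alg unfolding unital_algebra_def by simp

lemma madd1: "mult (x + y) z = mult x z + mult y z" using alg unfolding unital_algebra_def by blast
lemma madd2: "mult x (y + z) = mult x y + mult x z" using alg unfolding unital_algebra_def by blast
lemma msc1: "mult (scale c x) y = scale c (mult x y)" using alg unfolding unital_algebra_def by blast
lemma msc2: "mult x (scale c y) = scale c (mult x y)" using alg unfolding unital_algebra_def by blast
lemma mone1: "mult one x = x" using alg unfolding unital_algebra_def by blast
lemma mone2: "mult x one = x" using alg unfolding unital_algebra_def by blast

lemma sadd: "\<sigma> (x + y) = \<sigma> x + \<sigma> y" using inv unfolding involution_def by blast
lemma ssc: "\<sigma> (scale c x) = scale c (\<sigma> x)" using inv unfolding involution_def by blast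
lemma smult: "\<sigma> (mult x y) = mult (\<sigma> y) (\<sigma> x)" using inv unfolding involution_def by blast
lemma sone: "\<sigma> one = one" using inv unfolding involution_def by blast
lemma ss: "\<sigma> (\<sigma> x) = x" using inv unfolding involution_def by blast
lemma trs: "\<exists>t. x + \<sigma> x = scale t one" using inv unfolding involution_def is_scalar_def by blast
lemma ns: "\<exists>t. mult x (\<sigma> x) = scale t one" using inv unfolding involution_def is_scalar_def by blast

lemma mneg1: "mult (- x) y = - mult x y"
  using msc1[of "-1" x y] by (simp add: scale_minus_left)
lemma mneg2: "mult x (- y) = - mult x y"
  using msc2[of x "-1" y] by (simp add: scale_minus_left)
lemma mdiff1: "mult (x - y) z = mult x z - mult y z"
  by (simp only: diff_conv_add_uminus madd1 mneg1)
lemma mdiff2: "mult x (y - z) = mult x y - mult x z"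
  by (simp only: diff_conv_add_uminus madd2 mneg2)
lemma m01: "mult 0 y = 0" using msc1[of 0 0 y] by simp
lemma m02: "mult y 0 = 0" using msc2[of y 0 0] by simp
lemma s0: "\<sigma> 0 = 0" using ssc[of 0 0] by simp

lemma triv: "one = 0 \<Longrightarrow> (x::'v) = 0" using mone1[of x] by (simp add: m01)

lemma triv2: "one = 0 \<Longrightarrow> (x::'v) = y"
proof -
  assume h: "one = 0"
  have "x = 0" by (rule triv[OF h])
  moreover have "y = 0" by (rule triv[OF h])
  ultimately show ?thesis by simp
qed

lemma scinj: "one \<noteq> 0 \<Longrightarrow> scale s one = scale t one \<Longrightarrow> s = t"
  by (metis eq_iff_diff_eq_0 scale_eq_0_iff scale_left_diff_distrib)

abbreviation tr where "tr x \<equiv> trace scale one \<sigma> x"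

lemma tr_eq: "one \<noteq> 0 \<Longrightarrow> x + \<sigma> x = scale (tr x) one"
proof -
  assume o: "one \<noteq> 0"
  obtain t where t: "x + \<sigma> x = scale t one" using trs by blast
  have "tr x = t" unfolding trace_def
    by (rule the_equality) (use t scinj[OF o] in auto)
  thus ?thesis using t by simp
qed

lemma sig_eq: "one \<noteq> 0 \<Longrightarrow> \<sigma> x = scale (tr x) one - x"
  using tr_eq[of x] by (simp add: algebra_simps)

lemma part1: "\<sigma> (mult a b) - mult b a =
   scale (tr a * tr b) one - scale (tr a) b - scale (tr b) a"
proof (cases "one = 0")
  case True
  then show ?thesis by (rule triv2)
next
  case False
  have "\<sigma> (mult a b) = mult (\<sigma> b) (\<sigma> a)" by (rule smult)
  also have "\<dots> = mult (scale (tr b) one - b) (scale (tr a) one - a)"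
    using sig_eq[OF False] by simp
  also have "\<dots> = scale (tr b * tr a) one - scale (tr b) a - scale (tr a) b + mult b a"
    unfolding mdiff1 mdiff2 msc1 msc2 mone1 mone2 scale_scale by (simp add: algebra_simps)
  finally show ?thesis by (simp add: mult.commute)
qed

lemma is_sc: "is_scalar scale one x \<longleftrightarrow> (\<exists>t. x = scale t one)"
  by (simp add: is_scalar_def)

lemma im_tr: "one \<noteq> 0 \<Longrightarrow> u \<in> imag_part scale mult one \<Longrightarrow> tr u = 0"
proof -
  assume o: "one \<noteq> 0" and u: "u \<in> imag_part scale mult one"
  show ?thesis
  proof (cases "u = 0")
    case True
    have "scale (tr 0) one = scale 0 one" using tr_eq[OF o, of 0] by (simp add: s0)
    then show ?thesis using True scinj[OF o] by blast
  next
    case False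
    then have ns1: "\<not> (\<exists>t. u = scale t one)" and sq: "\<exists>t. mult u u = scale t one"
      using u unfolding imag_part_def is_scalar_def by auto
    obtain n where n: "mult u (\<sigma> u) = scale n one" using ns by blast
    obtain s where s: "mult u u = scale s one" using sq by blast
    have "mult u (\<sigma> u) = scale (tr u) u - mult u u"
      using sig_eq[OF o, of u] by (simp add: mdiff2 msc2 mone2)
    then have "scale (tr u) u = scale (n + s) one" using n s by (simp add: algebra_simps)
    show ?thesis
    proof (rule ccontr)
      assume "tr u \<noteq> 0"
      then have "u = scale (inverse (tr u) * (n + s)) one"
        using \<open>scale (tr u) u = scale (n + s) one\<close>
        by (metis scale_scale left_inverse scale_one)
      then show False using ns1 by blast
    qed
  qed
qed

lemma dep_comm: "lin_dep3 scale one a b \<Longrightarrow> mult a b = mult b a"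
proof (cases "one = 0")
  case True then show ?thesis by (rule triv2)
next
  case o: False
  assume "lin_dep3 scale one a b"
  then obtain c0 c1 c2 where nz: "(c0, c1, c2) \<noteq> (0, 0, 0)"
    and e: "scale c0 one + scale c1 a + scale c2 b = 0" unfolding lin_dep3_def by blast
  show ?thesis
  proof (cases "c2 = 0")
    case False
    have "b = - (scale (inverse c2 * c0) one + scale (inverse c2 * c1) a)"
    proof -
      have "scale c2 b = - (scale c0 one + scale c1 a)" using e neg_eq_iff_add_eq_0 by metis
      then have "scale (inverse c2) (scale c2 b) = scale (inverse c2) (- (scale c0 one + scale c1 a))" by simp
      then show ?thesis using False by (simp add: scale_minus_right scale_right_distrib scale_right_diff_distrib)
    qed
    then show ?thesis by (simp add: madd1 madd2 mdiff1 mdiff2 msc1 msc2 mone1 mone2 mneg1 mneg2)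
  next
    case c2: True
    show ?thesis
    proof (cases "c1 = 0")
      case True
      then have "c0 \<noteq> 0" using nz c2 by auto
      then have "one = 0" using e c2 True by simp
      then show ?thesis using o by blast
    next
      case False
      have "scale c0 one + scale c1 a = 0" using e c2 by simp
      then have "scale c1 a = - scale c0 one" by (metis add.commute neg_eq_iff_add_eq_0)
      then have "scale (inverse c1) (scale c1 a) = scale (inverse c1) (- scale c0 one)" by simp
      then have "a = scale (- inverse c1 * c0) one" using False by (simp add: scale_minus_right)
      then show ?thesis by (simp add: msc1 msc2 mone1 mone2 mneg1 mneg2)
    qed
  qed
qed

lemma tr0_cases:
  assumes o: "one \<noteq> 0" and ta: "tr a = 0" and tb: "tr b = 0"
  shows "(a \<in> imag_part scale mult one \<and> b \<in> imag_part scale mult one) \<or> lin_dep3 scale one a b"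
proof -
  have im: "x \<in> imag_part scale mult one \<or> (\<exists>t. x = scale t one)" if "tr x = 0" for x
  proof -
    have sx: "\<sigma> x = - x" using sig_eq[OF o, of x] that by simp
    obtain n where n: "mult x (\<sigma> x) = scale n one" using ns by blast
    have "- mult x x = scale n one" using n sx by (simp add: mneg2)
    then have "mult x x = scale (- n) one" by (metis minus_minus scale_minus_left)
    then show ?thesis unfolding imag_part_def is_scalar_def by blast
  qed
  show ?thesis
  proof (cases "\<exists>t. a = scale t one")
    case True
    then obtain t where "a = scale t one" by blast
    then have "scale t one + scale (-1) a + scale 0 b = 0" by (simp add: scale_minus_left)
    then show ?thesis unfolding lin_dep3_def by (metis neg_equal_0_iff_equal one_neq_zero prod.inject)
  next
    case False
    show ?thesis
    proof (cases "\<exists>t. b = scale t one")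
      case True
      then obtain t where "b = scale t one" by blast
      then have "scale t one + scale 0 a + scale (-1) b = 0" by (simp add: scale_minus_left)
      then show ?thesis unfolding lin_dep3_def by (metis neg_equal_0_iff_equal one_neq_zero prod.inject)
    next
      case False
      then show ?thesis using im[OF ta] im[OF tb] \<open>\<not> (\<exists>t. a = scale t one)\<close> by blast
    qed
  qed
qed

lemma key:
  assumes o: "one \<noteq> 0" and h: "scale (tr a * tr b) one - scale (tr a) b - scale (tr b) a = 0"
  shows "(a \<in> imag_part scale mult one \<and> b \<in> imag_part scale mult one) \<or> lin_dep3 scale one a b"
proof (cases "tr a = 0 \<and> tr b = 0")
  case True then show ?thesis using tr0_cases[OF o] by blast
next
  case False
  have "scale (tr a * tr b) one + scale (- tr b) a + scale (- tr a) b = 0"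
    using h by (simp add: scale_minus_left algebra_simps)
  moreover have "(tr a * tr b, - tr b, - tr a) \<noteq> (0, 0, 0)" using False by auto
  ultimately show ?thesis unfolding lin_dep3_def by blast
qed

end

theorem lemma4p6:
  fixes scale :: "'f::field \<Rightarrow> 'v::ab_group_add \<Rightarrow> 'v"
    and mult :: "'v \<Rightarrow> 'v \<Rightarrow> 'v" and one :: 'v and \<sigma> :: "'v \<Rightarrow> 'v"
  assumes char: "(2::'f) \<noteq> 0"
    and alg: "unital_algebra scale mult one"
    and inv: "involution scale mult one \<sigma>"
  shows "(\<forall>a b. \<sigma> (mult a b) - mult b a =
              scale (trace scale one \<sigma> a * trace scale one \<sigma> b) one
              - scale (trace scale one \<sigma> a) b - scale (trace scale one \<sigma> b) a)
     \<and> (vN_finite mult one \<longleftrightarrow>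
          (\<forall>a b. (\<exists>t. t \<noteq> 0 \<and> mult a b = scale t one) \<longrightarrow>
             (a \<in> imag_part scale mult one \<and> b \<in> imag_part scale mult one)
             \<or> lin_dep3 scale one a b))
     \<and> (reversible mult \<longleftrightarrow>
          (\<forall>a b. mult a b = 0 \<longrightarrow>
             (a \<in> imag_part scale mult one \<and> b \<in> imag_part scale mult one)
             \<or> lin_dep3 scale one a b))"
proof -
  interpret ia scale mult one \<sigma> using alg inv by unfold_locales
  have P1: "\<forall>a b. \<sigma> (mult a b) - mult b a =
              scale (tr a * tr b) one - scale (tr a) b - scale (tr b) a"
    using part1 by blast
  have depz: "lin_dep3 scale one a b" if "one = 0" for a b
  proof -
    have "scale 1 one + scale 0 a + scale 0 b = 0" using that by simp
    then show ?thesis unfolding lin_dep3_def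
      by (intro exI[of _ 1] exI[of _ 0]) simp
  qed
  have imcomm: "\<sigma> (mult a b) = mult b a" if "one \<noteq> 0" "a \<in> imag_part scale mult one"
    "b \<in> imag_part scale mult one" for a b
    using part1[of a b] im_tr[OF that(1) that(2)] im_tr[OF that(1) that(3)] by simp
  have P2: "vN_finite mult one \<longleftrightarrow>
          (\<forall>a b. (\<exists>t. t \<noteq> 0 \<and> mult a b = scale t one) \<longrightarrow>
             (a \<in> imag_part scale mult one \<and> b \<in> imag_part scale mult one)
             \<or> lin_dep3 scale one a b)"
  proof
    assume vn: "vN_finite mult one"
    show "\<forall>a b. (\<exists>t. t \<noteq> 0 \<and> mult a b = scale t one) \<longrightarrow>
             (a \<in> imag_part scale mult one \<and> b \<in> imag_part scale mult one)
             \<or> lin_dep3 scale one a b"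
    proof (intro allI impI)
      fix a b assume "\<exists>t. t \<noteq> 0 \<and> mult a b = scale t one"
      then obtain t where t0: "t \<noteq> 0" and ab: "mult a b = scale t one" by blast
      show "(a \<in> imag_part scale mult one \<and> b \<in> imag_part scale mult one) \<or> lin_dep3 scale one a b"
      proof (cases "one = 0")
        case True then show ?thesis using depz by blast
      next
        case o: False
        have "mult a (scale (inverse t) b) = one" using ab t0 by (simp add: msc2)
        then have "mult (scale (inverse t) b) a = one" using vn unfolding vN_finite_def by blast
        then have "scale t (mult (scale (inverse t) b) a) = scale t one" by simp
        then have ba: "mult b a = scale t one" using t0 by (simp add: msc1)
        have "\<sigma> (mult a b) = scale t one" using ab by (simp add: ssc sone)
        then have e: "\<sigma> (mult a b) - mult b a = 0" using ba by simp
        have "scale (tr a * tr b) one - scale (tr a) b - scale (tr b) a = 0"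
          using P1[rule_format, of a b] e by metis
        then show ?thesis using key[OF o] by blast
      qed
    qed
  next
    assume R: "\<forall>a b. (\<exists>t. t \<noteq> 0 \<and> mult a b = scale t one) \<longrightarrow>
             (a \<in> imag_part scale mult one \<and> b \<in> imag_part scale mult one)
             \<or> lin_dep3 scale one a b"
    show "vN_finite mult one" unfolding vN_finite_def
    proof (intro allI impI)
      fix a b assume ab: "mult a b = one"
      show "mult b a = one"
      proof (cases "one = 0")
        case True then show ?thesis by (rule triv2)
      next
        case o: False
        have "\<exists>t. t \<noteq> 0 \<and> mult a b = scale t one" using ab by (intro exI[of _ 1]) simp
        then have "(a \<in> imag_part scale mult one \<and> b \<in> imag_part scale mult one) \<or> lin_dep3 scale one a b"
          using R by blast
        then show ?thesis
          using imcomm[OF o, of a b] dep_comm[of a b] ab sone by auto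
      qed
    qed
  qed
  have P3: "reversible mult \<longleftrightarrow>
          (\<forall>a b. mult a b = 0 \<longrightarrow>
             (a \<in> imag_part scale mult one \<and> b \<in> imag_part scale mult one)
             \<or> lin_dep3 scale one a b)"
  proof
    assume rv: "reversible mult"
    show "\<forall>a b. mult a b = 0 \<longrightarrow>
             (a \<in> imag_part scale mult one \<and> b \<in> imag_part scale mult one)
             \<or> lin_dep3 scale one a b"
    proof (intro allI impI)
      fix a b assume ab: "mult a b = 0"
      show "(a \<in> imag_part scale mult one \<and> b \<in> imag_part scale mult one) \<or> lin_dep3 scale one a b"
      proof (cases "one = 0")
        case True then show ?thesis using depz by blast
      next
        case o: False
        have ba: "mult b a = 0" using rv ab unfolding reversible_def by blast
        have "scale (tr a * tr b) one - scale (tr a) b - scale (tr b) a = 0"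
          using P1[rule_format, of a b] ab ba s0 by simp
        then show ?thesis using key[OF o] by blast
      qed
    qed
  next
    assume R: "\<forall>a b. mult a b = 0 \<longrightarrow>
             (a \<in> imag_part scale mult one \<and> b \<in> imag_part scale mult one)
             \<or> lin_dep3 scale one a b"
    show "reversible mult" unfolding reversible_def
    proof (intro allI impI)
      fix a b assume ab: "mult a b = 0"
      show "mult b a = 0"
      proof (cases "one = 0")
        case True then show ?thesis by (rule triv2)
      next
        case o: False
        have "(a \<in> imag_part scale mult one \<and> b \<in> imag_part scale mult one) \<or> lin_dep3 scale one a b"
          using R ab by blast
        then show ?thesis
          using imcomm[OF o, of a b] dep_comm[of a b] ab s0 by auto
      qed
    qed
  qed
  show ?thesis using P1 P2 P3 by blast
qed

end
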